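(* Let $n\ge1$ and $G=\mathbf{Z}\times\mathbf{Z}/n\mathbf{Z}$. Let $m$ be a divisor of $n$ and let $(H_k)_{k>0}$ be a sequence of infinite subgroups of $G$ of rank 2. Then $(H_k)_{k>0}$ converges in $\mathcal{C}(G)$ to $\{0\}\times\langle m\rangle$ if and only if, for all $k$ large enough, there exists $g_k\in G$ such that $H_k$ is generated by $(0,m)$ and $g_k$, with $g_k\to\infty$ in $G$ (i.e. $(g_k)$ eventually leaves every finite subset of $G$).
   Context: $\mathcal{C}(G)$ is the set of subgroups of the discrete group $G$ with the Chabauty topology (for discrete $G$, this is the topology induced by the product topology on $\{0,1\}^G$). The rank of a finitely generated group is its minimal number of generators. $\langle m\rangle$ denotes the subgroup of $\mathbf{Z}/n\mathbf{Z}$ generated by the class of $m$. *)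

theory Defs
  imports "HOL-Algebra.Generated_Groups"
begin

text \<open>The group Z x Z/nZ, with Z/nZ represented by the residues {0..<n}.\<close>
definition ZxZn :: "nat \<Rightarrow> (int \<times> int) monoid" where
  "ZxZn n = \<lparr> carrier = {p. 0 \<le> snd p \<and> snd p < int n},
             mult = (\<lambda>x y. (fst x + fst y, (snd x + snd y) mod int n)),
             one = (0, 0) \<rparr>"

definition group_rank :: "('a, 'b) monoid_scheme \<Rightarrow> 'a set \<Rightarrow> nat" where
  "group_rank G H = (LEAST r. \<exists>S. finite S \<and> card S = r \<and> S \<subseteq> H \<and> generate G S = H)"

text \<open>Chabauty convergence for a discrete group: pointwise convergence of
  indicator functions in the product topology on {0,1}^G.\<close>
definition chabauty_tendsto :: "('a, 'b) monoid_scheme \<Rightarrow> (nat \<Rightarrow> 'a set) \<Rightarrow> 'a set \<Rightarrow> bool" where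
  "chabauty_tendsto G Hs L \<longleftrightarrow>
     (\<forall>g \<in> carrier G. eventually (\<lambda>k. (g \<in> Hs k) = (g \<in> L)) sequentially)"

definition tends_to_infinity :: "('a, 'b) monoid_scheme \<Rightarrow> (nat \<Rightarrow> 'a) \<Rightarrow> bool" where
  "tends_to_infinity G g \<longleftrightarrow>
     (\<forall>F. F \<subseteq> carrier G \<and> finite F \<longrightarrow> eventually (\<lambda>k. g k \<notin> F) sequentially)"

end

theory Submission
  imports Defs
begin

lemma ZxZn_group: assumes "n \<ge> 1" shows "group (ZxZn n)"
proof (rule groupI)
  show "\<exists>y\<in>carrier (ZxZn n). y \<otimes>\<^bsub>ZxZn n\<^esub> x = \<one>\<^bsub>ZxZn n\<^esub>" if "x \<in> carrier (ZxZn n)" for x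
  proof (rule bexI[of _ "(- fst x, (- snd x) mod int n)"])
    have "((- snd x) mod int n + snd x) mod int n = 0" by (simp add: mod_add_left_eq)
    then show "(- fst x, (- snd x) mod int n) \<otimes>\<^bsub>ZxZn n\<^esub> x = \<one>\<^bsub>ZxZn n\<^esub>"
      by (simp add: ZxZn_def)
    show "(- fst x, (- snd x) mod int n) \<in> carrier (ZxZn n)" using assms by (simp add: ZxZn_def)
  qed
qed (use assms in \<open>auto simp: ZxZn_def mod_add_left_eq mod_add_right_eq add.assoc\<close>)

lemma ZxZn_inv: assumes "n \<ge> 1" "x \<in> carrier (ZxZn n)"
  shows "inv\<^bsub>ZxZn n\<^esub> x = (- fst x, (- snd x) mod int n)"
  using assms by (intro group.inv_equality[OF ZxZn_group])
     (auto simp: ZxZn_def mod_add_left_eq)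

lemma sub_nat:
  assumes "n \<ge> 1" "subgroup K (ZxZn n)" "u \<in> K" "v \<in> K"
  shows "(int p * fst u + int q * fst v, (int p * snd u + int q * snd v) mod int n) \<in> K"
proof (induction p)
  case 0
  show ?case
  proof (induction q)
    case 0
    then show ?case using subgroup.one_closed[OF assms(2)] by (simp add: ZxZn_def)
  next
    case (Suc q)
    have "(int q * fst v, (int q * snd v) mod int n) \<otimes>\<^bsub>ZxZn n\<^esub> v \<in> K"
      using Suc assms by (intro subgroup.m_closed) auto
    then show ?case by (simp add: ZxZn_def algebra_simps mod_add_left_eq mod_add_right_eq)
  qed
next
  case (Suc p)
  have "(int p * fst u + int q * fst v, (int p * snd u + int q * snd v) mod int n) \<otimes>\<^bsub>ZxZn n\<^esub> u \<in> K"
    using Suc assms by (intro subgroup.m_closed) auto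
  then show ?case by (simp add: ZxZn_def algebra_simps mod_add_left_eq mod_add_right_eq)
qed

lemma modcomb: "(a::int) mod n = a' mod n \<Longrightarrow> b mod n = b' mod n \<Longrightarrow> (x*a + y*b) mod n = (x*a' + y*b') mod n"
proof -
  assume h: "a mod n = a' mod n" "b mod n = b' mod n"
  have "(x*a) mod n = (x*a') mod n" using h(1) by (metis mod_mult_right_eq)
  moreover have "(y*b) mod n = (y*b') mod n" using h(2) by (metis mod_mult_right_eq)
  ultimately show ?thesis by (rule mod_add_cong)
qed

lemma sgnpick:
  assumes "n \<ge> 1" "subgroup K (ZxZn n)" "u \<in> K"
  shows "\<exists>u' p. u' \<in> K \<and> int p * fst u' = j * fst u \<and> (int p * snd u') mod int n = (j * snd u) mod int n"
proof (cases "j \<ge> 0")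
  case True
  then show ?thesis using assms(3) by (intro exI[of _ u] exI[of _ "nat j"]) simp
next
  case False
  have car: "u \<in> carrier (ZxZn n)" using subgroup.subset[OF assms(2)] assms(3) by auto
  have "(- fst u, (- snd u) mod int n) \<in> K"
    using subgroup.m_inv_closed[OF assms(2) assms(3)] ZxZn_inv[OF assms(1) car] by simp
  moreover have "(int (nat (-j)) * ((- snd u) mod int n)) mod int n = (j * snd u) mod int n"
  proof -
    have "(int (nat (-j)) * ((- snd u) mod int n)) mod int n = (int (nat (-j)) * (- snd u)) mod int n"
      by (rule mod_mult_right_eq)
    also have "int (nat (-j)) * (- snd u) = j * snd u" using False by simp
    finally show ?thesis .
  qed
  ultimately show ?thesis using False
    by (intro exI[of _ "(- fst u, (- snd u) mod int n)"] exI[of _ "nat (-j)"]) simp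
qed

lemma sub_int:
  assumes "n \<ge> 1" "subgroup K (ZxZn n)" "u \<in> K" "v \<in> K"
  shows "(j * fst u + i * fst v, (j * snd u + i * snd v) mod int n) \<in> K"
proof -
  obtain u' p where u': "u' \<in> K" "int p * fst u' = j * fst u" "(int p * snd u') mod int n = (j * snd u) mod int n"
    using sgnpick[OF assms(1,2,3)] by blast
  obtain v' q where v': "v' \<in> K" "int q * fst v' = i * fst v" "(int q * snd v') mod int n = (i * snd v) mod int n"
    using sgnpick[OF assms(1,2,4)] by blast
  have "(int p * snd u' + int q * snd v') mod int n = (j * snd u + i * snd v) mod int n"
    using modcomb[OF u'(3) v'(3), of 1 1] by simp
  then show ?thesis using sub_nat[OF assms(1,2) u'(1) v'(1), of p q] u' v' by simp
qed

lemma gen2: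
  assumes n: "n \<ge> 1" and g: "(a, c) \<in> carrier (ZxZn n)"
  shows "generate (ZxZn n) {(0, int m mod int n), (a, c)} = {(j*a, (j*c + i*int m) mod int n) | j i. True}"
    (is "?G = ?T")
proof
  have c: "0 \<le> c" "c < int n" using g by (auto simp: ZxZn_def)
  have mc: "(0, int m mod int n) \<in> carrier (ZxZn n)" using n by (simp add: ZxZn_def)
  show "?G \<subseteq> ?T"
  proof
    fix x assume "x \<in> ?G"
    then show "x \<in> ?T"
    proof (induction rule: generate.induct)
      case one
      then show ?case by (auto simp: ZxZn_def intro!: exI[of _ 0])
    next
      case (incl h)
      then show ?case
      proof
        assume "h = (0, int m mod int n)"
        then have "h = (0*a, (0*c + 1*int m) mod int n)" by simp
        then show ?thesis by blast
      next
        assume "h \<in> {(a,c)}"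
        then have "h = (1*a, (1*c + 0*int m) mod int n)" using c by simp
        then show ?thesis by blast
      qed
    next
      case (inv h)
      then show ?case
      proof
        assume "h = (0, int m mod int n)"
        then have "inv\<^bsub>ZxZn n\<^esub> h = (0*a, (0*c + (-1)*int m) mod int n)" using ZxZn_inv[OF n mc]
          by (simp add: mod_minus_eq)
        then show ?thesis by blast
      next
        assume "h \<in> {(a,c)}"
        then have "inv\<^bsub>ZxZn n\<^esub> h = ((-1)*a, ((-1)*c + 0*int m) mod int n)" using ZxZn_inv[OF n g]
          by simp
        then show ?thesis by blast
      qed
    next
      case (eng h1 h2)
      then obtain j1 i1 j2 i2 where h: "h1 = (j1*a, (j1*c + i1*int m) mod int n)" "h2 = (j2*a, (j2*c + i2*int m) mod int n)"
        by blast
      have "((j1*c + i1*int m) mod int n + (j2*c + i2*int m) mod int n) mod int n = ((j1+j2)*c + (i1+i2)*int m) mod int n"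
        by (simp add: mod_add_eq algebra_simps)
      then have "h1 \<otimes>\<^bsub>ZxZn n\<^esub> h2 = ((j1+j2)*a, ((j1+j2)*c + (i1+i2)*int m) mod int n)"
        using h by (simp add: ZxZn_def algebra_simps)
      then show ?case by blast
    qed
  qed
  show "?T \<subseteq> ?G"
  proof
    fix x assume "x \<in> ?T"
    then obtain j i where x: "x = (j*a, (j*c + i*int m) mod int n)" by blast
    have sg: "subgroup ?G (ZxZn n)" using g mc by (intro group.generate_is_subgroup[OF ZxZn_group[OF n]]) auto
    have "(j * fst (a,c) + i * fst (0::int, int m mod int n), (j * snd (a,c) + i * snd (0::int, int m mod int n)) mod int n) \<in> ?G"
      by (rule sub_int[OF n sg]) (auto intro: generate.incl)
    moreover have "(j * c + i * (int m mod int n)) mod int n = (j*c + i*int m) mod int n"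
      using modcomb[of c "int n" c "int m mod int n" "int m" j i] by simp
    ultimately show "x \<in> ?G" using x by simp
  qed
qed

lemma gen1:
  assumes n: "n \<ge> 1"
  shows "generate (ZxZn n) {(0, int m mod int n)} = {(0, (i*int m) mod int n) | i. True}"
    (is "?G = ?T")
proof
  have mc: "(0, int m mod int n) \<in> carrier (ZxZn n)" using n by (simp add: ZxZn_def)
  show "?G \<subseteq> ?T"
  proof
    fix x assume "x \<in> ?G"
    then show "x \<in> ?T"
    proof (induction rule: generate.induct)
      case one
      then show ?case by (auto simp: ZxZn_def intro!: exI[of _ 0])
    next
      case (incl h)
      then show ?case by (auto intro!: exI[of _ 1])
    next
      case (inv h)
      then show ?case using ZxZn_inv[OF n mc]
          by (auto simp: mod_minus_eq intro!: exI[of _ "-1"])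
    next
      case (eng h1 h2)
      then obtain i1 i2 where h: "h1 = (0, (i1*int m) mod int n)" "h2 = (0, (i2*int m) mod int n)"
        by blast
      have "((i1*int m) mod int n + (i2*int m) mod int n) mod int n = ((i1+i2)*int m) mod int n"
        by (simp add: mod_add_eq algebra_simps)
      then have "h1 \<otimes>\<^bsub>ZxZn n\<^esub> h2 = (0, ((i1+i2)*int m) mod int n)"
        using h by (simp add: ZxZn_def algebra_simps)
      then show ?case by blast
    qed
  qed
  show "?T \<subseteq> ?G"
  proof
    fix x assume "x \<in> ?T"
    then obtain i where x: "x = (0, (i*int m) mod int n)" by blast
    have sg: "subgroup ?G (ZxZn n)" using mc by (intro group.generate_is_subgroup[OF ZxZn_group[OF n]]) auto
    have "(i * fst (0::int, int m mod int n) + 0 * fst (0::int, int m mod int n), (i * snd (0::int, int m mod int n) + 0 * snd (0::int, int m mod int n)) mod int n) \<in> ?G"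
      by (rule sub_int[OF n sg]) (auto intro: generate.incl)
    moreover have "(i * (int m mod int n)) mod int n = (i*int m) mod int n"
      by (simp add: mod_mult_right_eq)
    ultimately show "x \<in> ?G" using x by simp
  qed
qed

lemma abs_mult_lt_zero: "\<bar>(j::int) * a\<bar> < \<bar>a\<bar> \<Longrightarrow> j = 0"
proof (rule ccontr)
  assume h: "\<bar>j * a\<bar> < \<bar>a\<bar>" "j \<noteq> 0"
  then have "1 \<le> \<bar>j\<bar>" by simp
  then have "1 * \<bar>a\<bar> \<le> \<bar>j\<bar> * \<bar>a\<bar>" by (rule mult_right_mono) simp
  then show False using h(1) by (simp add: abs_mult)
qed

lemma finite_bound: "finite (F::(int\<times>int) set) \<Longrightarrow> \<exists>N::int. \<forall>y\<in>F. \<bar>fst y\<bar> \<le> N"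
proof (induction rule: finite_induct)
  case empty then show ?case by simp
next
  case (insert x F)
  then obtain N where "\<forall>y\<in>F. \<bar>fst y\<bar> \<le> N" by blast
  then show ?case by (intro exI[of _ "max N \<bar>fst x\<bar>"]) auto
qed

lemma minpos:
  assumes n: "n \<ge> 1" and sg: "subgroup K (ZxZn n)" and inf: "infinite K"
  shows "\<exists>x\<in>K. 0 < fst x \<and> (\<forall>y\<in>K. 0 < fst y \<longrightarrow> fst x \<le> fst y)"
proof -
  have sub: "K \<subseteq> carrier (ZxZn n)" using subgroup.subset[OF sg] .
  have "\<exists>x\<in>K. fst x \<noteq> 0"
  proof (rule ccontr)
    assume "\<not> ?thesis"
    then have "K \<subseteq> {0} \<times> {0..<int n}" using sub by (force simp: ZxZn_def)
    then show False using inf finite_subset by blast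
  qed
  then obtain x where x: "x \<in> K" "fst x \<noteq> 0" by blast
  have "\<exists>y\<in>K. 0 < fst y"
  proof (cases "fst x > 0")
    case True then show ?thesis using x by blast
  next
    case False
    have "((-1) * fst x + 0 * fst x, ((-1) * snd x + 0 * snd x) mod int n) \<in> K"
      by (rule sub_int[OF n sg x(1) x(1)])
    then show ?thesis using False x(2) by (intro bexI) auto
  qed
  then obtain y where y: "y \<in> K" "0 < fst y" by blast
  define P where "P = (\<lambda>d::nat. \<exists>z\<in>K. 0 < fst z \<and> fst z = int d)"
  have Py: "P (nat (fst y))" using y unfolding P_def by auto
  have "P (LEAST d. P d)" by (rule LeastI[of P, OF Py])
  then obtain z where z: "z \<in> K" "0 < fst z" "fst z = int (LEAST d. P d)" unfolding P_def by blast
  have "fst z \<le> fst w" if "w \<in> K" "0 < fst w" for w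
  proof -
    have "P (nat (fst w))" using that unfolding P_def by auto
    then have "(LEAST d. P d) \<le> nat (fst w)" by (rule Least_le)
    then show ?thesis using z(3) that(2) by linarith
  qed
  then show ?thesis using z by blast
qed

theorem proposition3:
  fixes n m :: nat and H :: "nat \<Rightarrow> (int \<times> int) set"
  assumes "n \<ge> 1"
    and "m dvd n"
    and "\<forall>k>0. subgroup (H k) (ZxZn n) \<and> infinite (H k) \<and> group_rank (ZxZn n) (H k) = 2"
  shows "chabauty_tendsto (ZxZn n) H (generate (ZxZn n) {(0, int m mod int n)})
     \<longleftrightarrow> (\<exists>g :: nat \<Rightarrow> int \<times> int.
            (\<forall>\<^sub>F k in sequentially. g k \<in> carrier (ZxZn n) \<and>
                 H k = generate (ZxZn n) {(0, int m mod int n), g k})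
            \<and> tends_to_infinity (ZxZn n) g)"
proof -
  note n = assms(1)
  define L where "L = {(0::int, (i*int m) mod int n) | i. True}"
  have gL: "generate (ZxZn n) {(0, int m mod int n)} = L" unfolding L_def by (rule gen1[OF n])
  have sgH: "subgroup (H k) (ZxZn n)" "infinite (H k)" if "k > 0" for k using assms(3) that by auto
  show ?thesis unfolding gL
  proof
    assume conv: "chabauty_tendsto (ZxZn n) H L"
    define g where "g = (\<lambda>k. SOME x. x \<in> H k \<and> 0 < fst x \<and> (\<forall>y\<in>H k. 0 < fst y \<longrightarrow> fst x \<le> fst y))"
    have gk: "g k \<in> H k \<and> 0 < fst (g k) \<and> (\<forall>y\<in>H k. 0 < fst y \<longrightarrow> fst (g k) \<le> fst y)" if "k > 0" for k
      unfolding g_def by (rule someI_ex) (use minpos[OF n sgH[OF that]] in blast)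
    have gcar: "g k \<in> carrier (ZxZn n)" if "k > 0" for k
      using gk[OF that] subgroup.subset[OF sgH(1)[OF that]] by blast
    have E1: "\<forall>\<^sub>F k in sequentially. \<forall>y\<in>{0::int} \<times> {0..<int n}. (y \<in> H k) = (y \<in> L)"
      using conv unfolding chabauty_tendsto_def
      by (intro eventually_ball_finite) (auto simp: ZxZn_def)
    have E2: "\<forall>\<^sub>F k in sequentially. \<forall>y\<in>{1..N} \<times> {0..<int n}. y \<notin> H k" for N
    proof -
      have "\<forall>\<^sub>F k in sequentially. \<forall>y\<in>{1..N} \<times> {0..<int n}. (y \<in> H k) = (y \<in> L)"
        using conv unfolding chabauty_tendsto_def
        by (intro eventually_ball_finite) (auto simp: ZxZn_def)
      moreover have "y \<notin> L" if "y \<in> {1..N} \<times> {0..<int n}" for y using that unfolding L_def by auto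
      ultimately show ?thesis by (auto elim: eventually_mono)
    qed
    have Hk: "H k = generate (ZxZn n) {(0, int m mod int n), g k}"
      if k: "k > 0" and e1: "\<forall>y\<in>{0::int} \<times> {0..<int n}. (y \<in> H k) = (y \<in> L)" for k
    proof
      have mL: "(0, int m mod int n) \<in> L" unfolding L_def by (intro CollectI exI[of _ 1]) simp
      have "(0, int m mod int n) \<in> H k" using e1 mL n by auto
      then show "generate (ZxZn n) {(0, int m mod int n), g k} \<subseteq> H k"
        using gk[OF k] by (intro group.generate_subgroup_incl[OF ZxZn_group[OF n]] sgH(1)[OF k]) auto
      obtain d c where dc: "g k = (d, c)" by fastforce
      have d: "0 < d" "\<And>y. y \<in> H k \<Longrightarrow> 0 < fst y \<Longrightarrow> d \<le> fst y" "(d,c) \<in> H k"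
        using gk[OF k] dc by auto
      show "H k \<subseteq> generate (ZxZn n) {(0, int m mod int n), g k}"
      proof
        fix x assume x: "x \<in> H k"
        have xc: "0 \<le> snd x" "snd x < int n" using x subgroup.subset[OF sgH(1)[OF k]] by (auto simp: ZxZn_def)
        define q where "q = fst x div d"
        have r: "(1 * fst x + (-q) * fst (d,c), (1 * snd x + (-q) * snd (d,c)) mod int n) \<in> H k"
          by (rule sub_int[OF n sgH(1)[OF k] x d(3)])
        have "fst x - q * d = fst x mod d" unfolding q_def by (simp add: minus_div_mult_eq_mod)
        moreover have "0 \<le> fst x mod d" "fst x mod d < d" using d(1) by auto
        ultimately have r0: "fst x - q * d = 0" using d(2)[OF r] by fastforce
        then have "(0, (snd x - q * c) mod int n) \<in> H k" using r by simp
        then have "(0, (snd x - q * c) mod int n) \<in> L" using e1 n by auto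
        then obtain i where i: "(snd x - q * c) mod int n = (i * int m) mod int n" unfolding L_def by blast
        have "snd x = snd x mod int n" using xc by simp
        also have "\<dots> = (q * c + (snd x - q * c)) mod int n" by simp
        also have "\<dots> = (q * c + (snd x - q * c) mod int n) mod int n" by (simp add: mod_add_right_eq)
        also have "\<dots> = (q * c + i * int m) mod int n" unfolding i by (simp add: mod_add_right_eq)
        finally have "snd x = (q * c + i * int m) mod int n" .
        moreover have "fst x = q * d" using r0 by simp
        ultimately have "x = (q * d, (q * c + i * int m) mod int n)" by (simp add: prod_eq_iff)
        then show "x \<in> generate (ZxZn n) {(0, int m mod int n), g k}"
          unfolding dc gen2[OF n gcar[OF k, unfolded dc]] by blast
      qed
    qed
    have ev1: "\<forall>\<^sub>F k in sequentially. g k \<in> carrier (ZxZn n) \<and>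
                 H k = generate (ZxZn n) {(0, int m mod int n), g k}"
      using E1 eventually_gt_at_top[of 0] by eventually_elim (use Hk gcar in blast)
    have "tends_to_infinity (ZxZn n) g"
      unfolding tends_to_infinity_def
    proof (intro allI impI)
      fix F assume F: "F \<subseteq> carrier (ZxZn n) \<and> finite F"
      obtain N where N: "\<forall>y\<in>F. \<bar>fst y\<bar> \<le> N" using finite_bound F by blast
      show "\<forall>\<^sub>F k in sequentially. g k \<notin> F"
        using E2[of N] eventually_gt_at_top[of 0]
      proof eventually_elim
        case (elim k)
        have "g k \<in> H k" "0 < fst (g k)" using gk[OF elim(2)] by auto
        moreover have "0 \<le> snd (g k)" "snd (g k) < int n" using gcar[OF elim(2)] by (auto simp: ZxZn_def)
        ultimately have "\<not> fst (g k) \<le> N"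
        proof (intro notI)
          assume "fst (g k) \<le> N"
          with \<open>0 < fst (g k)\<close> \<open>0 \<le> snd (g k)\<close> \<open>snd (g k) < int n\<close>
          have "g k \<in> {1..N} \<times> {0..<int n}" by (cases "g k") auto
          with elim(1) have "g k \<notin> H k" by (rule bspec)
          then show False using \<open>g k \<in> H k\<close> by (rule notE)
        qed
        then show ?case using N by force
      qed
    qed
    then show "\<exists>g. (\<forall>\<^sub>F k in sequentially. g k \<in> carrier (ZxZn n) \<and>
                 H k = generate (ZxZn n) {(0, int m mod int n), g k}) \<and> tends_to_infinity (ZxZn n) g"
      using ev1 by blast
  next
    assume "\<exists>g. (\<forall>\<^sub>F k in sequentially. g k \<in> carrier (ZxZn n) \<and>
                 H k = generate (ZxZn n) {(0, int m mod int n), g k}) \<and> tends_to_infinity (ZxZn n) g"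
    then obtain g where ev: "\<forall>\<^sub>F k in sequentially. g k \<in> carrier (ZxZn n) \<and>
                 H k = generate (ZxZn n) {(0, int m mod int n), g k}" and ti: "tends_to_infinity (ZxZn n) g"
      by blast
    show "chabauty_tendsto (ZxZn n) H L"
      unfolding chabauty_tendsto_def
    proof
      fix x assume xc: "x \<in> carrier (ZxZn n)"
      define F where "F = {y \<in> carrier (ZxZn n). \<bar>fst y\<bar> \<le> \<bar>fst x\<bar>}"
      have "F \<subseteq> {-\<bar>fst x\<bar>..\<bar>fst x\<bar>} \<times> {0..<int n}" unfolding F_def by (auto simp: ZxZn_def)
      then have "finite F" using finite_subset by blast
      then have "\<forall>\<^sub>F k in sequentially. g k \<notin> F" using ti unfolding tends_to_infinity_def F_def by auto
      then show "\<forall>\<^sub>F k in sequentially. (x \<in> H k) = (x \<in> L)"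
        using ev
      proof eventually_elim
        case (elim k)
        obtain a c where ac: "g k = (a, c)" by fastforce
        have big: "\<bar>fst x\<bar> < \<bar>a\<bar>" using elim ac unfolding F_def by auto
        have HT: "H k = {(j*a, (j*c + i*int m) mod int n) | j i. True}"
          using elim(2) gen2[OF n, of a c] ac by auto
        show ?case
        proof
          assume "x \<in> H k"
          then obtain j i where x: "x = (j*a, (j*c + i*int m) mod int n)" unfolding HT by blast
          then have "j = 0" using big abs_mult_lt_zero by auto
          then show "x \<in> L" using x unfolding L_def by auto
        next
          assume "x \<in> L"
          then obtain i where "x = (0, (i*int m) mod int n)" unfolding L_def by blast
          then have "x = (0*a, (0*c + i*int m) mod int n)" by simp
          then show "x \<in> H k" unfolding HT by blast
        qed
      qed
    qed
  qed
qed

end
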